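(* Let $X$ and $Y$ be (discrete) real random variables on a common probability space such that $\mathbb E[X]=0$, $\mathbb E[Y^2]\le1$, $\mathbb E[XY]=\beta>0$, and $X$ is sub-Gaussian with parameter $c>0$, i.e. $\Pr(|X|\ge t)\le 2e^{-t^2/c^2}$ for all $t\ge0$. Then \[ I(X;Y)=\tilde\Omega\!\left(\frac{\beta^4}{c^4}\right);\] more precisely, there is an absolute constant $C>0$ such that $\sqrt{I(X;Y)}\ge \dfrac{C\,\beta^2}{c^2\ln\!\big(2^{20}c^2/\beta^2\big)}$ (the paper obtains $C=\frac{1}{192\sqrt2}$).
   Context: $I(X;Y)=\mathbb E_Y[\mathrm{KL}(P_{X\mid Y}\,\|\,P_X)]$ is the mutual information (natural logarithm), with $\mathrm{KL}(P_1\|P_2)=\sum_x P_1(x)\ln\frac{P_1(x)}{P_2(x)}$. $\tilde\Omega$ hides absolute constants and factors polylogarithmic in $c/\beta$. *)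

theory Defs
  imports "HOL-Probability.Probability"
begin

text \<open>Summand of the Kullback-Leibler divergence (natural logarithm), written in the
  standard nonnegative form p ln(p/q) - p + q (whose sum over x equals
  sum p ln(p/q), since both pmfs sum to 1), with the conventions 0 ln(0/q) = 0 and
  p ln(p/0) = infinity for p > 0.  This makes the countable sum well defined in [0, infinity].\<close>
definition kl_term :: "real \<Rightarrow> real \<Rightarrow> ennreal" where
  "kl_term p q = (if p = 0 then ennreal q
                  else if q = 0 then \<infinity>
                  else ennreal (p * ln (p / q) - p + q))"

definition KL_pmf :: "'a pmf \<Rightarrow> 'a pmf \<Rightarrow> ennreal" where
  "KL_pmf P1 P2 = (\<integral>\<^sup>+ x. kl_term (pmf P1 x) (pmf P2 x) \<partial>count_space UNIV)"

definition cond_fst :: "('a \<times> 'b) pmf \<Rightarrow> 'b \<Rightarrow> 'a pmf" where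
  "cond_fst P y = map_pmf fst (cond_pmf P {z. snd z = y})"

definition mutual_info :: "('a \<times> 'b) pmf \<Rightarrow> ennreal" where
  "mutual_info P = (\<integral>\<^sup>+ y. KL_pmf (cond_fst P y) (map_pmf fst P) \<partial>measure_pmf (map_pmf snd P))"

end

theory Submission
  imports Defs
begin


lemma pmf_le_fst: "pmf P (x,y) \<le> pmf (map_pmf fst P) x"
proof -
  have "pmf P (x,y) = measure P {(x,y)}" by (simp add: measure_pmf_single)
  also have "\<dots> \<le> measure P (fst -` {x})"
    by (intro measure_pmf.finite_measure_mono) auto
  finally show ?thesis by (simp add: pmf_map)
qed

lemma pmf_le_snd: "pmf P (x,y) \<le> pmf (map_pmf snd P) y"
proof -
  have "pmf P (x,y) = measure P {(x,y)}" by (simp add: measure_pmf_single)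
  also have "\<dots> \<le> measure P (snd -` {y})"
    by (intro measure_pmf.finite_measure_mono) auto
  finally show ?thesis by (simp add: pmf_map)
qed

lemma pmf_cond_fst:
  fixes P :: "('a \<times> 'b) pmf"
  assumes "y \<in> set_pmf (map_pmf snd P)"
  shows "pmf (cond_fst P y) x = pmf P (x,y) / pmf (map_pmf snd P) y"
proof -
  define S where "S = {z::'a\<times>'b. snd z = y}"
  have ne: "set_pmf P \<inter> S \<noteq> {}" using assms by (auto simp: S_def)
  define Q where "Q = cond_pmf P S"
  have sQ: "set_pmf Q = set_pmf P \<inter> S" unfolding Q_def using ne by simp
  have "pmf (cond_fst P y) x = measure Q (fst -` {x})"
    by (simp add: cond_fst_def pmf_map Q_def S_def)
  also have "\<dots> = measure Q (fst -` {x} \<inter> set_pmf Q)" by (simp add: measure_Int_set_pmf)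
  also have "fst -` {x} \<inter> set_pmf Q = {(x,y)} \<inter> set_pmf Q" using sQ by (auto simp: S_def)
  also have "measure Q \<dots> = measure Q {(x,y)}" by (simp add: measure_Int_set_pmf)
  also have "\<dots> = pmf P (x,y) / measure P S"
    using pmf_cond[OF ne, of "(x,y)"] by (simp add: measure_pmf_single Q_def S_def)
  also have "measure P S = pmf (map_pmf snd P) y"
    by (simp add: pmf_map S_def vimage_def)
  finally show ?thesis .
qed




lemma kl_hom:
  assumes "b > 0" "a \<ge> 0"
  shows "kl_term a b = ennreal b * kl_term (a/b) 1"
proof (cases "a = 0")
  case True then show ?thesis by (simp add: kl_term_def)
next
  case False
  then have "a / b \<noteq> 0" using assms by simp
  then have "kl_term (a/b) 1 = ennreal (a/b * ln (a/b) - a/b + 1)" by (simp add: kl_term_def)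
  moreover have "b * (a/b * ln (a/b) - a/b + 1) = a * ln (a/b) - a + b"
    using assms by (simp add: field_simps)
  ultimately show ?thesis using False assms
    by (simp add: kl_term_def ennreal_mult'[symmetric])
qed

lemma kl_hell:
  assumes "a \<ge> 0"
  shows "ennreal ((sqrt a - 1)\<^sup>2) \<le> kl_term a 1"
proof (cases "a = 0")
  case True then show ?thesis by (simp add: kl_term_def)
next
  case False
  define s where "s = sqrt a"
  have s: "s > 0" "a = s\<^sup>2" using assms False by (auto simp: s_def)
  have l: "ln (1/s) \<le> 1/s - 1" using s by (intro ln_le_minus_one) auto
  have l2: "ln s \<ge> 1 - 1/s" using l s by (simp add: ln_div)
  have "s * (1 - 1/s) = s - 1" using s by (simp add: field_simps)
  then have "s * ln s \<ge> s - 1" using mult_left_mono[OF l2, of s] s by simp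
  then have h: "s * s \<le> s * (1 + s * ln s)" using s by (intro mult_left_mono) auto
  have h2: "s * (1 + s * ln s) = s + s * s * ln s" by (simp add: algebra_simps)
  have e1: "(sqrt a - 1)\<^sup>2 = s * s - 2 * s + 1" by (simp add: s_def[symmetric] power2_eq_square algebra_simps)
  have la: "ln a = 2 * ln s" using s by (simp add: ln_powr[symmetric] powr_numeral)
  have e2: "a * ln (a/1) - a + 1 = 2*(s * s * ln s) - s * s + 1" using s la by (simp add: power2_eq_square)
  have "(sqrt a - 1)\<^sup>2 \<le> a * ln (a/1) - a + 1" unfolding e1 e2 using h h2 by linarith
  then show ?thesis using False by (simp add: kl_term_def ennreal_leI)
qed




lemma mi_eq:
  fixes P :: "('a \<times> 'b) pmf"
  shows "mutual_info P = (\<integral>\<^sup>+ z. kl_term (pmf P z / pmf (pair_pmf (map_pmf fst P) (map_pmf snd P)) z) 1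
            \<partial>pair_pmf (map_pmf fst P) (map_pmf snd P))"
proof -
  define PX where "PX = map_pmf fst P"
  define PY where "PY = map_pmf snd P"
  define G where "G = (\<lambda>x y. kl_term (pmf P (x,y) / (pmf PX x * pmf PY y)) 1)"
  have inner: "KL_pmf (cond_fst P y) PX = (\<integral>\<^sup>+x. G x y \<partial>PX)" if y: "y \<in> set_pmf PY" for y
  proof -
    have pY: "pmf PY y > 0" using y by (simp add: pmf_positive)
    have "KL_pmf (cond_fst P y) PX = (\<integral>\<^sup>+x. kl_term (pmf P (x,y) / pmf PY y) (pmf PX x) \<partial>count_space UNIV)"
      unfolding KL_pmf_def using pmf_cond_fst[of y P] y by (simp add: PY_def)
    also have "\<dots> = (\<integral>\<^sup>+x. ennreal (pmf PX x) * G x y \<partial>count_space UNIV)"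
    proof (intro nn_integral_cong)
      fix x
      show "kl_term (pmf P (x,y) / pmf PY y) (pmf PX x) = ennreal (pmf PX x) * G x y"
      proof (cases "pmf PX x = 0")
        case True
        then have "pmf P (x,y) = 0" using pmf_le_fst[of P x y] by (simp add: PX_def)
        then show ?thesis using True by (simp add: kl_term_def)
      next
        case False
        then have "pmf PX x > 0" by (simp add: order_le_neq_trans)
        then show ?thesis unfolding G_def using pY
          by (subst kl_hom) (auto simp: field_simps)
      qed
    qed
    also have "\<dots> = (\<integral>\<^sup>+x. G x y \<partial>PX)" by (simp add: nn_integral_measure_pmf)
    finally show ?thesis .
  qed
  have "mutual_info P = (\<integral>\<^sup>+y. \<integral>\<^sup>+x. G x y \<partial>PX \<partial>PY)"
    unfolding mutual_info_def PX_def[symmetric] PY_def[symmetric]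
    by (intro nn_integral_cong_AE) (auto simp: AE_measure_pmf_iff inner)
  also have "\<dots> = (\<integral>\<^sup>+w. G (snd w) (fst w) \<partial>pair_pmf PY PX)"
    by (simp add: nn_integral_pair_pmf')
  also have "\<dots> = (\<integral>\<^sup>+z. G (fst z) (snd z) \<partial>pair_pmf PX PY)"
    by (subst pair_commute_pmf[of PX PY]) (simp add: case_prod_beta)
  also have "\<dots> = (\<integral>\<^sup>+ z. kl_term (pmf P z / pmf (pair_pmf PX PY) z) 1 \<partial>pair_pmf PX PY)"
    by (intro nn_integral_cong) (auto simp: G_def pmf_pair)
  finally show ?thesis by (simp add: PX_def PY_def)
qed




lemma prod_int_nn:
  fixes a b :: "_ \<Rightarrow> real"
  assumes "integrable (measure_pmf A) a" "integrable (measure_pmf B) b"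
    and "\<And>x. a x \<ge> 0" "\<And>y. b y \<ge> 0"
  shows "integrable (measure_pmf (pair_pmf A B)) (\<lambda>z. a (fst z) * b (snd z)) \<and>
         (\<integral>z. a (fst z) * b (snd z) \<partial>pair_pmf A B) = (\<integral>x. a x \<partial>A) * (\<integral>y. b y \<partial>B)"
proof -
  have ia: "(\<integral>\<^sup>+x. ennreal (a x) \<partial>A) = ennreal (\<integral>x. a x \<partial>A)"
    using assms by (intro nn_integral_eq_integral) auto
  have ib: "(\<integral>\<^sup>+x. ennreal (b x) \<partial>B) = ennreal (\<integral>x. b x \<partial>B)"
    using assms by (intro nn_integral_eq_integral) auto
  have "(\<integral>\<^sup>+z. ennreal (a (fst z) * b (snd z)) \<partial>pair_pmf A B)
        = (\<integral>\<^sup>+x. \<integral>\<^sup>+y. ennreal (a x) * ennreal (b y) \<partial>B \<partial>A)"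
    using assms by (simp add: nn_integral_pair_pmf' ennreal_mult)
  also have "\<dots> = (\<integral>\<^sup>+x. ennreal (a x) * (\<integral>\<^sup>+y. ennreal (b y) \<partial>B) \<partial>A)"
    by (simp add: nn_integral_cmult)
  also have "\<dots> = (\<integral>\<^sup>+x. ennreal (a x) \<partial>A) * (\<integral>\<^sup>+y. ennreal (b y) \<partial>B)"
    by (simp add: nn_integral_multc)
  also have "\<dots> = ennreal ((\<integral>x. a x \<partial>A) * (\<integral>y. b y \<partial>B))"
    using ia ib assms by (simp add: ennreal_mult integral_nonneg_AE)
  finally have eq: "(\<integral>\<^sup>+z. ennreal (a (fst z) * b (snd z)) \<partial>pair_pmf A B) = ennreal ((\<integral>x. a x \<partial>A) * (\<integral>y. b y \<partial>B))" .
  have int: "integrable (measure_pmf (pair_pmf A B)) (\<lambda>z. a (fst z) * b (snd z))"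
    using eq assms by (intro integrableI_nonneg) auto
  have "(\<integral>z. a (fst z) * b (snd z) \<partial>pair_pmf A B) = enn2real (\<integral>\<^sup>+z. ennreal (a (fst z) * b (snd z)) \<partial>pair_pmf A B)"
    using assms by (intro integral_eq_nn_integral) auto
  also have "\<dots> = (\<integral>x. a x \<partial>A) * (\<integral>y. b y \<partial>B)"
    using eq assms by (simp add: integral_nonneg_AE)
  finally show ?thesis using int by simp
qed

lemma prod_int:
  fixes a b :: "_ \<Rightarrow> real"
  assumes ia: "integrable (measure_pmf A) a" and ib: "integrable (measure_pmf B) b"
  shows "integrable (measure_pmf (pair_pmf A B)) (\<lambda>z. a (fst z) * b (snd z)) \<and>
         (\<integral>z. a (fst z) * b (snd z) \<partial>pair_pmf A B) = (\<integral>x. a x \<partial>A) * (\<integral>y. b y \<partial>B)"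
proof -
  define ap where "ap = (\<lambda>x. max (a x) 0)"
  define an where "an = (\<lambda>x. max (- a x) 0)"
  define bp where "bp = (\<lambda>x. max (b x) 0)"
  define bn where "bn = (\<lambda>x. max (- b x) 0)"
  have iap: "integrable A ap" "integrable A an" unfolding ap_def an_def using ia by auto
  have ibp: "integrable B bp" "integrable B bn" unfolding bp_def bn_def using ib by auto
  have ea: "a = (\<lambda>x. ap x - an x)" by (auto simp: ap_def an_def fun_eq_iff)
  have eb: "b = (\<lambda>x. bp x - bn x)" by (auto simp: bp_def bn_def fun_eq_iff)
  have nn: "\<And>x. ap x \<ge> 0" "\<And>x. an x \<ge> 0" "\<And>x. bp x \<ge> 0" "\<And>x. bn x \<ge> 0"
    by (auto simp: ap_def an_def bp_def bn_def)
  note P1 = prod_int_nn[OF iap(1) ibp(1) nn(1) nn(3)]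
  note P2 = prod_int_nn[OF iap(1) ibp(2) nn(1) nn(4)]
  note P3 = prod_int_nn[OF iap(2) ibp(1) nn(2) nn(3)]
  note P4 = prod_int_nn[OF iap(2) ibp(2) nn(2) nn(4)]
  have e: "(\<lambda>z. a (fst z) * b (snd z)) = (\<lambda>z. ((ap (fst z) * bp (snd z) - ap (fst z) * bn (snd z))
            - an (fst z) * bp (snd z)) + an (fst z) * bn (snd z))"
    by (auto simp: fun_eq_iff ea eb algebra_simps)
  have "integrable (pair_pmf A B) (\<lambda>z. a (fst z) * b (snd z))"
    unfolding e using P1 P2 P3 P4 by auto
  moreover have "(\<integral>z. a (fst z) * b (snd z) \<partial>pair_pmf A B) = (\<integral>x. a x \<partial>A) * (\<integral>y. b y \<partial>B)"
    unfolding e using P1 P2 P3 P4 iap ibp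
    by (simp add: ea eb Bochner_Integration.integral_add Bochner_Integration.integral_diff algebra_simps)
  ultimately show ?thesis by simp
qed




lemma cs_real:
  fixes u v :: "_ \<Rightarrow> real"
  assumes [measurable]: "u \<in> borel_measurable M" "v \<in> borel_measurable M"
    and A: "(\<integral>\<^sup>+x. ennreal ((u x)\<^sup>2) \<partial>M) \<le> ennreal A"
    and B: "(\<integral>\<^sup>+x. ennreal ((v x)\<^sup>2) \<partial>M) \<le> ennreal B"
    and "A \<ge> 0" "B \<ge> 0"
  shows "\<bar>\<integral>x. u x * v x \<partial>M\<bar> \<le> sqrt A * sqrt B"
proof (cases "integrable M (\<lambda>x. u x * v x)")
  case False
  then show ?thesis using assms by (simp add: not_integrable_integral_eq)
next
  case True
  have "ennreal \<bar>\<integral>x. u x * v x \<partial>M\<bar> \<le> (\<integral>\<^sup>+x. norm (u x * v x) \<partial>M)"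
    using integral_norm_bound_ennreal[OF True] by simp
  also have "\<dots> = (\<integral>\<^sup>+x. ennreal \<bar>u x\<bar> * ennreal \<bar>v x\<bar> \<partial>M)"
    by (intro nn_integral_cong) (simp add: abs_mult ennreal_mult)
  finally have 1: "ennreal \<bar>\<integral>x. u x * v x \<partial>M\<bar> \<le> (\<integral>\<^sup>+x. ennreal \<bar>u x\<bar> * ennreal \<bar>v x\<bar> \<partial>M)" .
  have "(\<integral>\<^sup>+x. ennreal \<bar>u x\<bar> * ennreal \<bar>v x\<bar> \<partial>M)\<^sup>2 \<le>
        (\<integral>\<^sup>+x. (ennreal \<bar>u x\<bar>)\<^sup>2 \<partial>M) * (\<integral>\<^sup>+x. (ennreal \<bar>v x\<bar>)\<^sup>2 \<partial>M)"
    by (intro Cauchy_Schwarz_nn_integral) auto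
  also have "\<dots> = (\<integral>\<^sup>+x. ennreal ((u x)\<^sup>2) \<partial>M) * (\<integral>\<^sup>+x. ennreal ((v x)\<^sup>2) \<partial>M)"
    by (simp add: ennreal_power)
  also have "\<dots> \<le> ennreal A * ennreal B" using A B by (intro mult_mono) auto
  finally have 2: "(\<integral>\<^sup>+x. ennreal \<bar>u x\<bar> * ennreal \<bar>v x\<bar> \<partial>M)\<^sup>2 \<le> ennreal (A * B)"
    using assms by (simp add: ennreal_mult)
  have "(ennreal \<bar>\<integral>x. u x * v x \<partial>M\<bar>)\<^sup>2 \<le> ennreal (A * B)"
    using 1 2 by (meson order_trans power_mono zero_le)
  then have "\<bar>\<integral>x. u x * v x \<partial>M\<bar>\<^sup>2 \<le> A * B"
    using assms by (metis abs_ge_zero ennreal_le_iff ennreal_power mult_nonneg_nonneg power2_abs)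
  then have "\<bar>\<integral>x. u x * v x \<partial>M\<bar> \<le> sqrt (A * B)"
    using real_le_rsqrt by blast
  then show ?thesis by (simp add: real_sqrt_mult)
qed

lemma density_eq:
  fixes P :: "('a \<times> 'b) pmf"
  defines "R \<equiv> pair_pmf (map_pmf fst P) (map_pmf snd P)"
  shows "measure_pmf P = density (measure_pmf R) (\<lambda>z. ennreal (pmf P z / pmf R z))"
proof -
  have key: "pmf R z * (pmf P z / pmf R z) = pmf P z" for z
  proof (cases "pmf R z = 0")
    case True
    obtain x y where z: "z = (x,y)" by (cases z)
    from True have "pmf (map_pmf fst P) x = 0 \<or> pmf (map_pmf snd P) y = 0"
      by (simp add: R_def z pmf_pair)
    then have "pmf P z = 0" using pmf_le_fst[of P x y] pmf_le_snd[of P x y] pmf_nonneg[of P z]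
      by (auto simp: z)
    then show ?thesis by simp
  qed simp
  have "density (measure_pmf R) (\<lambda>z. ennreal (pmf P z / pmf R z))
        = density (density (count_space UNIV) (\<lambda>z. ennreal (pmf R z))) (\<lambda>z. ennreal (pmf P z / pmf R z))"
    by (simp add: measure_pmf_eq_density)
  also have "\<dots> = density (count_space UNIV) (\<lambda>z. ennreal (pmf R z) * ennreal (pmf P z / pmf R z))"
    by (intro density_density_eq) auto
  also have "\<dots> = density (count_space UNIV) (\<lambda>z. ennreal (pmf P z))"
    by (intro arg_cong2[where f=density] refl ext)
       (metis key ennreal_mult pmf_nonneg divide_nonneg_nonneg)
  also have "\<dots> = measure_pmf P" by (simp add: measure_pmf_eq_density)
  finally show ?thesis by simp
qed




lemma abs_le_1_sq: "\<bar>y::real\<bar> \<le> 1 + y\<^sup>2"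
proof -
  have "0 \<le> (\<bar>y\<bar> - 1)\<^sup>2" by simp
  then have "0 \<le> \<bar>y\<bar>\<^sup>2 - 2*\<bar>y\<bar> + 1" by (simp add: power2_eq_square algebra_simps)
  then show ?thesis by simp
qed

lemma sq_aux: fixes r h :: real assumes "r \<ge> 0"
  shows "r * h - h = (sqrt r - 1) * ((sqrt r + 1) * h)"
proof -
  have e: "(sqrt r - 1) * ((sqrt r + 1) * h) = (sqrt r * sqrt r - 1) * h" by (simp add: algebra_simps)
  show ?thesis unfolding e using assms by (simp add: algebra_simps)
qed
lemma sq_aux2: fixes r :: real assumes "r \<ge> 0"
  shows "(sqrt r + 1)\<^sup>2 \<le> 2 * (r + 1)"
proof -
  obtain s where s: "s = sqrt r" by simp
  have "0 \<le> (s - 1)\<^sup>2" by simp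
  then have "0 \<le> s * s - 2 * s + 1" by (simp add: power2_eq_square algebra_simps)
  moreover have "(s + 1)\<^sup>2 = s * s + 2 * s + 1" by (simp add: power2_eq_square algebra_simps)
  moreover have "s * s = r" using assms s by simp
  ultimately show ?thesis unfolding s[symmetric] by (smt (verit))
qed

lemma core:
  fixes P :: "(real \<times> real) pmf" and T \<beta> Gb :: real
  assumes T: "T > 0"
    and i1: "integrable (measure_pmf P) (\<lambda>z. fst z)"
    and e1: "measure_pmf.expectation P (\<lambda>z. fst z) = 0"
    and i2: "integrable (measure_pmf P) (\<lambda>z. (snd z)\<^sup>2)"
    and e2: "measure_pmf.expectation P (\<lambda>z. (snd z)\<^sup>2) \<le> 1"
    and i3: "integrable (measure_pmf P) (\<lambda>z. fst z * snd z)"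
    and e3: "measure_pmf.expectation P (\<lambda>z. fst z * snd z) = \<beta>"
    and G: "(\<integral>\<^sup>+z. ennreal ((if \<bar>fst z\<bar> \<le> T then 0 else fst z)\<^sup>2) \<partial>P) \<le> ennreal Gb"
    and Gb: "Gb \<ge> 0"
    and fin: "mutual_info P \<noteq> \<infinity>"
  shows "\<beta> \<le> 2 * T * sqrt (enn2real (mutual_info P)) + 2 * sqrt Gb"
proof -
  define PX where "PX = map_pmf fst P"
  define PY where "PY = map_pmf snd P"
  define R where "R = pair_pmf PX PY"
  define \<rho> where "\<rho> = (\<lambda>z. pmf P z / pmf R z)"
  define f where "f = (\<lambda>x::real. if \<bar>x\<bar> \<le> T then x else 0)"
  define gg where "gg = (\<lambda>x::real. if \<bar>x\<bar> \<le> T then 0 else x)"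
  define h where "h = (\<lambda>z::real\<times>real. f (fst z) * snd z)"
  have rho_nn: "\<rho> z \<ge> 0" for z by (simp add: \<rho>_def)
  have dens: "measure_pmf P = density (measure_pmf R) (\<lambda>z. ennreal (\<rho> z))"
    unfolding \<rho>_def R_def PX_def PY_def by (rule density_eq)
  have fb: "\<bar>f x\<bar> \<le> T" for x using T by (simp add: f_def)
  have ny: "(\<integral>\<^sup>+z. ennreal ((snd z)\<^sup>2) \<partial>P) \<le> ennreal 1"
    using nn_integral_eq_integral[OF i2] e2 by (simp add: ennreal_leI)
  have iy: "integrable (measure_pmf P) (\<lambda>z. snd z)"
    by (rule Bochner_Integration.integrable_bound[of _ "\<lambda>z. 1 + (snd z)\<^sup>2"])
       (use i2 abs_le_1_sq in auto)
  have ih: "integrable (measure_pmf P) h"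
  proof (rule Bochner_Integration.integrable_bound[of _ "\<lambda>z. T * (1 + (snd z)\<^sup>2)"])
    show "integrable (measure_pmf P) (\<lambda>z. T * (1 + (snd z)\<^sup>2))" using i2 by auto
    show "AE z in measure_pmf P. norm (h z) \<le> norm (T * (1 + (snd z)\<^sup>2))"
    proof (intro AE_I2)
      fix z :: "real \<times> real"
      have "\<bar>h z\<bar> = \<bar>f (fst z)\<bar> * \<bar>snd z\<bar>" by (simp add: h_def abs_mult)
      also have "\<dots> \<le> T * (1 + (snd z)\<^sup>2)"
        using fb abs_le_1_sq[of "snd z"] T by (intro mult_mono) auto
      finally show "norm (h z) \<le> norm (T * (1 + (snd z)\<^sup>2))" using T by simp
    qed
  qed simp
  have ifx: "integrable (measure_pmf P) (\<lambda>z. f (fst z))"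
    by (rule Bochner_Integration.integrable_bound[of _ "\<lambda>z. T"]) (use fb T in \<open>auto intro!: AE_I2 simp: abs_of_pos\<close>)
  have egg: "gg x = x - f x" for x by (simp add: gg_def f_def)
  have igx: "integrable (measure_pmf P) (\<lambda>z. gg (fst z))"
    unfolding egg using i1 ifx by auto
  have egy: "(\<lambda>z. fst z * snd z) = (\<lambda>z. h z + gg (fst z) * snd z)"
    by (auto simp: fun_eq_iff h_def egg algebra_simps)
  have igy: "integrable (measure_pmf P) (\<lambda>z. gg (fst z) * snd z)"
  proof -
    have "(\<lambda>z. gg (fst z) * snd z) = (\<lambda>z. fst z * snd z - h z)"
      by (auto simp: fun_eq_iff h_def egg algebra_simps)
    then show ?thesis using i3 ih by auto
  qed
  have E1: "\<beta> = (\<integral>z. h z \<partial>P) + (\<integral>z. gg (fst z) * snd z \<partial>P)"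
    using e3 ih igy by (simp add: egy)
  have Gg: "(\<integral>\<^sup>+z. ennreal ((gg (fst z))\<^sup>2) \<partial>P) \<le> ennreal Gb"
    using G by (simp add: gg_def)
  have one: "(\<integral>\<^sup>+z. ennreal ((1::real)\<^sup>2) \<partial>P) \<le> ennreal 1"
    by (simp add: measure_pmf.emeasure_space_1)
  have E2: "\<bar>\<integral>z. gg (fst z) * snd z \<partial>P\<bar> \<le> sqrt Gb"
    using cs_real[OF _ _ Gg ny Gb] by simp
  have E3a: "\<bar>\<integral>z. gg (fst z) \<partial>P\<bar> \<le> sqrt Gb"
    using cs_real[OF _ _ Gg one Gb] by simp
  have E3b: "\<bar>\<integral>z. snd z \<partial>P\<bar> \<le> 1"
    using cs_real[OF _ _ ny one] by simp
  have pr: "integrable R h \<and> (\<integral>z. h z \<partial>R) = (\<integral>x. f x \<partial>PX) * (\<integral>y. y \<partial>PY)"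
    unfolding R_def h_def
    by (rule prod_int[of PX f PY "\<lambda>y. y"]) (use ifx iy in \<open>simp_all add: PX_def PY_def\<close>)
  have "(\<integral>x. f x \<partial>PX) = (\<integral>z. f (fst z) \<partial>P)" by (simp add: PX_def)
  also have "\<dots> = (\<integral>z. fst z \<partial>P) - (\<integral>z. gg (fst z) \<partial>P)"
    using i1 ifx by (simp add: egg Bochner_Integration.integral_diff)
  finally have fX: "(\<integral>x. f x \<partial>PX) = - (\<integral>z. gg (fst z) \<partial>P)" using e1 by simp
  have yY: "(\<integral>y. y \<partial>PY) = (\<integral>z. snd z \<partial>P)" by (simp add: PY_def)
  have E3: "\<bar>\<integral>z. h z \<partial>R\<bar> \<le> sqrt Gb"
  proof -
    have "\<bar>\<integral>z. h z \<partial>R\<bar> = \<bar>\<integral>z. gg (fst z) \<partial>P\<bar> * \<bar>\<integral>z. snd z \<partial>P\<bar>"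
      using pr fX yY by (simp add: abs_mult)
    also have "\<dots> \<le> sqrt Gb * 1" using E3a E3b Gb by (intro mult_mono) auto
    finally show ?thesis by simp
  qed
  have ihd: "integrable (density (measure_pmf R) (\<lambda>z. ennreal (\<rho> z))) h"
    using ih by (simp add: dens)
  have irh: "integrable R (\<lambda>z. \<rho> z * h z)"
    using ihd by (subst (asm) integrable_density) (auto simp: rho_nn)
  have E4: "(\<integral>z. h z \<partial>P) = (\<integral>z. \<rho> z * h z \<partial>R)"
    by (subst dens, subst integral_density) (auto simp: rho_nn)
  have ihR: "integrable R h" using pr by simp
  have sq: "\<rho> z * h z - h z = (sqrt (\<rho> z) - 1) * ((sqrt (\<rho> z) + 1) * h z)" for z
    using rho_nn by (rule sq_aux)
  have E5: "(\<integral>z. h z \<partial>P) - (\<integral>z. h z \<partial>R) = (\<integral>z. (sqrt (\<rho> z) - 1) * ((sqrt (\<rho> z) + 1) * h z) \<partial>R)"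
    unfolding E4 using irh ihR by (simp add: sq[symmetric] Bochner_Integration.integral_diff)
  define A where "A = enn2real (mutual_info P)"
  have IA: "mutual_info P = ennreal A" using fin unfolding A_def by (simp add: ennreal_enn2real_if)
  have A0: "A \<ge> 0" by (simp add: A_def)
  have U: "(\<integral>\<^sup>+z. ennreal ((sqrt (\<rho> z) - 1)\<^sup>2) \<partial>R) \<le> ennreal A"
  proof -
    have "(\<integral>\<^sup>+z. ennreal ((sqrt (\<rho> z) - 1)\<^sup>2) \<partial>R) \<le> (\<integral>\<^sup>+z. kl_term (\<rho> z) 1 \<partial>R)"
      by (intro nn_integral_mono kl_hell rho_nn)
    also have "\<dots> = mutual_info P" by (simp add: mi_eq \<rho>_def R_def PX_def PY_def)
    finally show ?thesis using IA by simp
  qed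
  have V: "(\<integral>\<^sup>+z. ennreal (((sqrt (\<rho> z) + 1) * h z)\<^sup>2) \<partial>R) \<le> ennreal (4 * T\<^sup>2)"
  proof -
    have pw: "((sqrt (\<rho> z) + 1) * h z)\<^sup>2 \<le> 2 * T\<^sup>2 * (\<rho> z * (snd z)\<^sup>2 + (snd z)\<^sup>2)" for z
    proof -
      have a: "(sqrt (\<rho> z) + 1)\<^sup>2 \<le> 2 * (\<rho> z + 1)"
        using rho_nn by (rule sq_aux2)
      have b: "(h z)\<^sup>2 \<le> T\<^sup>2 * (snd z)\<^sup>2"
      proof -
        have "\<bar>h z\<bar> \<le> T * \<bar>snd z\<bar>" using fb[of "fst z"] by (simp add: h_def abs_mult mult_right_mono)
        then have "\<bar>h z\<bar>\<^sup>2 \<le> (T * \<bar>snd z\<bar>)\<^sup>2" by (intro power_mono) auto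
        then show ?thesis by (simp add: power_mult_distrib)
      qed
      have "((sqrt (\<rho> z) + 1) * h z)\<^sup>2 = (sqrt (\<rho> z) + 1)\<^sup>2 * (h z)\<^sup>2" by (simp add: power_mult_distrib)
      also have "\<dots> \<le> (2 * (\<rho> z + 1)) * (T\<^sup>2 * (snd z)\<^sup>2)"
        using a b rho_nn by (intro mult_mono) auto
      finally show ?thesis by (simp add: algebra_simps)
    qed
    have "(\<integral>\<^sup>+z. ennreal (((sqrt (\<rho> z) + 1) * h z)\<^sup>2) \<partial>R)
       \<le> (\<integral>\<^sup>+z. ennreal (2 * T\<^sup>2) * (ennreal (\<rho> z * (snd z)\<^sup>2) + ennreal ((snd z)\<^sup>2)) \<partial>R)"
    proof (intro nn_integral_mono)
      fix z
      have "ennreal (((sqrt (\<rho> z) + 1) * h z)\<^sup>2) \<le> ennreal (2 * T\<^sup>2 * (\<rho> z * (snd z)\<^sup>2 + (snd z)\<^sup>2))"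
        using pw by (rule ennreal_leI)
      also have "\<dots> = ennreal (2 * T\<^sup>2) * ennreal (\<rho> z * (snd z)\<^sup>2 + (snd z)\<^sup>2)"
        by (rule ennreal_mult') simp
      also have "ennreal (\<rho> z * (snd z)\<^sup>2 + (snd z)\<^sup>2) = ennreal (\<rho> z * (snd z)\<^sup>2) + ennreal ((snd z)\<^sup>2)"
        using rho_nn[of z] by (intro ennreal_plus) auto
      finally show "ennreal (((sqrt (\<rho> z) + 1) * h z)\<^sup>2) \<le> ennreal (2 * T\<^sup>2) * (ennreal (\<rho> z * (snd z)\<^sup>2) + ennreal ((snd z)\<^sup>2))" .
    qed
    also have "\<dots> = ennreal (2 * T\<^sup>2) * ((\<integral>\<^sup>+z. ennreal (\<rho> z * (snd z)\<^sup>2) \<partial>R) + (\<integral>\<^sup>+z. ennreal ((snd z)\<^sup>2) \<partial>R))"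
      by (simp add: nn_integral_cmult nn_integral_add)
    also have "(\<integral>\<^sup>+z. ennreal (\<rho> z * (snd z)\<^sup>2) \<partial>R) = (\<integral>\<^sup>+z. ennreal ((snd z)\<^sup>2) \<partial>P)"
    proof -
      have "(\<integral>\<^sup>+z. ennreal (\<rho> z * (snd z)\<^sup>2) \<partial>R) = (\<integral>\<^sup>+z. ennreal (\<rho> z) * ennreal ((snd z)\<^sup>2) \<partial>R)"
        by (intro nn_integral_cong) (simp add: ennreal_mult' rho_nn)
      also have "\<dots> = (\<integral>\<^sup>+z. ennreal ((snd z)\<^sup>2) \<partial>density (measure_pmf R) (\<lambda>z. ennreal (\<rho> z)))"
        by (rule nn_integral_density[symmetric]) auto
      also have "density (measure_pmf R) (\<lambda>z. ennreal (\<rho> z)) = measure_pmf P" using dens by simp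
      finally show ?thesis .
    qed
    also have "(\<integral>\<^sup>+z. ennreal ((snd z)\<^sup>2) \<partial>R) = (\<integral>\<^sup>+y. ennreal (y\<^sup>2) \<partial>PY)"
    proof -
      have "(\<integral>\<^sup>+y. ennreal (y\<^sup>2) \<partial>PY) = (\<integral>\<^sup>+y. ennreal (y\<^sup>2) \<partial>map_pmf snd R)"
        by (simp add: R_def map_snd_pair_pmf)
      then show ?thesis by simp
    qed
    also have "(\<integral>\<^sup>+y. ennreal (y\<^sup>2) \<partial>PY) = (\<integral>\<^sup>+z. ennreal ((snd z)\<^sup>2) \<partial>P)"
      by (simp add: PY_def)
    also have "ennreal (2 * T\<^sup>2) * ((\<integral>\<^sup>+z. ennreal ((snd z)\<^sup>2) \<partial>P) + (\<integral>\<^sup>+z. ennreal ((snd z)\<^sup>2) \<partial>P))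
        \<le> ennreal (2 * T\<^sup>2) * (ennreal 1 + ennreal 1)"
      using ny by (intro mult_left_mono add_mono) auto
    also have "\<dots> = ennreal (2 * T\<^sup>2) * ennreal 2" by simp
    also have "\<dots> = ennreal (4 * T\<^sup>2)" by (subst ennreal_mult'[symmetric]) auto
    finally show ?thesis .
  qed
  have E6: "\<bar>(\<integral>z. h z \<partial>P) - (\<integral>z. h z \<partial>R)\<bar> \<le> sqrt A * sqrt (4 * T\<^sup>2)"
    unfolding E5 by (rule cs_real[OF _ _ U V A0]) auto
  have "sqrt (4 * T\<^sup>2) = 2 * T" using T by (simp add: real_sqrt_mult)
  then have E6': "\<bar>(\<integral>z. h z \<partial>P) - (\<integral>z. h z \<partial>R)\<bar> \<le> 2 * T * sqrt A"
    using E6 by (simp add: mult.commute mult.left_commute)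
  show ?thesis using E1 E2 E3 E6' unfolding A_def by linarith
qed




lemma four_pow_ge: "4 ^ k \<le> exp ((4 ^ k - 1) :: real)"
  using exp_ge_add_one_self[of "4^k - 1 :: real"] by simp

lemma term_bound:
  fixes L :: real and k :: nat
  assumes L: "L \<ge> 2"
  shows "4 ^ k * exp (- (4 ^ k * L)) \<le> exp (- L) * (1/4) ^ k"
proof -
  have e: "(4::real) ^ k \<ge> 1" by simp
  have "(4::real) ^ k * 4 ^ k \<le> exp (4 ^ k - 1) * exp (4 ^ k - 1)"
    using four_pow_ge[of k] by (intro mult_mono) auto
  also have "\<dots> = exp (2 * (4 ^ k - 1))" by (simp add: exp_add[symmetric])
  also have "\<dots> \<le> exp ((4 ^ k - 1) * L)"
  proof -
    have "2 * (4 ^ k - 1) \<le> L * (4 ^ k - 1)" using mult_right_mono[OF L, of "4^k-1"] e by simp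
    then show ?thesis by (simp add: mult.commute)
  qed
  finally have 1: "(4::real) ^ k * 4 ^ k \<le> exp ((4 ^ k - 1) * L)" .
  have "4 ^ k * exp (- (4 ^ k * L)) = exp (- L) * ((4 ^ k * 4 ^ k) / exp ((4 ^ k - 1) * L)) * (1/4)^k"
    by (simp add: field_simps exp_add[symmetric] exp_diff power_one_over)
  also have "\<dots> \<le> exp (- L) * 1 * (1/4)^k"
    using 1 by (intro mult_mono mult_left_mono) auto
  finally show ?thesis by simp
qed

lemma find_shell:
  fixes x T :: real
  assumes "T > 0" "\<bar>x\<bar> > T"
  shows "\<exists>k::nat. T * 2 ^ k \<le> \<bar>x\<bar> \<and> \<bar>x\<bar> < T * 2 ^ (k+1)"
proof -
  obtain n :: nat where n: "\<bar>x\<bar> / T < 2 ^ n" using real_arch_pow[of 2 "\<bar>x\<bar>/T"] by auto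
  then have "\<bar>x\<bar> < T * 2 ^ n" using assms by (simp add: field_simps)
  then have ex: "\<exists>n. \<bar>x\<bar> < T * 2 ^ (n+1)"
    by (intro exI[of _ n]) (smt (verit) assms(1) mult_left_mono one_le_numeral power_increasing le_add1)
  define k where "k = (LEAST n. \<bar>x\<bar> < T * 2 ^ (n+1))"
  have k1: "\<bar>x\<bar> < T * 2 ^ (k+1)" unfolding k_def using ex by (rule LeastI_ex)
  have k2: "T * 2 ^ k \<le> \<bar>x\<bar>"
  proof (cases k)
    case 0 then show ?thesis using assms by simp
  next
    case (Suc j)
    then have "\<not> \<bar>x\<bar> < T * 2 ^ (j+1)" using not_less_Least[of j "\<lambda>n. \<bar>x\<bar> < T * 2 ^ (n+1)"]
      by (simp add: k_def)
    then show ?thesis using Suc by simp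
  qed
  show ?thesis using k1 k2 by blast
qed

lemma tail:
  fixes P :: "(real \<times> real) pmf" and c L :: real
  assumes c: "c > 0" and L: "L \<ge> 2"
    and tl: "\<forall>t\<ge>0. measure_pmf.prob P {z. \<bar>fst z\<bar> \<ge> t} \<le> 2 * exp (- t\<^sup>2 / c\<^sup>2)"
  shows "(\<integral>\<^sup>+z. ennreal ((if \<bar>fst z\<bar> \<le> c * sqrt L then 0 else fst z)\<^sup>2) \<partial>P) \<le> ennreal (11 * c\<^sup>2 * L * exp (- L))"
proof -
  define T where "T = c * sqrt L"
  have T: "T > 0" using c L by (simp add: T_def)
  have T2: "T\<^sup>2 = c\<^sup>2 * L" using L by (simp add: T_def power_mult_distrib)
  define F where "F = (\<lambda>k::nat. \<lambda>z::real\<times>real. ennreal (T\<^sup>2 * 4 ^ (k+1)) * indicator {z. T * 2 ^ k \<le> \<bar>fst z\<bar>} z)"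
  have pw: "ennreal ((if \<bar>fst z\<bar> \<le> T then 0 else fst z)\<^sup>2) \<le> (\<Sum>k. F k z)" for z
  proof (cases "\<bar>fst z\<bar> \<le> T")
    case True then show ?thesis by simp
  next
    case False
    then obtain k where k: "T * 2 ^ k \<le> \<bar>fst z\<bar>" "\<bar>fst z\<bar> < T * 2 ^ (k+1)"
      using find_shell[OF T] by force
    have "(fst z)\<^sup>2 = \<bar>fst z\<bar>\<^sup>2" by simp
    also have "\<dots> \<le> (T * 2 ^ (k+1))\<^sup>2" using k by (intro power_mono) auto
    also have "\<dots> = T\<^sup>2 * 4 ^ (k+1)"
    proof -
      have "(2::real) ^ (k+1) * 2 ^ (k+1) = 4 ^ (k+1)" by (simp add: power_mult_distrib[symmetric])
      then show ?thesis by (simp add: power2_eq_square algebra_simps)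
    qed
    finally have "ennreal ((fst z)\<^sup>2) \<le> F k z" using k by (simp add: F_def ennreal_leI)
    also have "F k z \<le> (\<Sum>k. F k z)"
      using sum_le_suminf[of "\<lambda>k. F k z" "{k}"] by (simp add: summableI)
    finally show ?thesis using False by simp
  qed
  define a where "a = 8 * T\<^sup>2 * exp (- L)"
  have a0: "a \<ge> 0" by (simp add: a_def)
  have Fk: "(\<integral>\<^sup>+z. F k z \<partial>P) \<le> ennreal (a * (1/4) ^ k)" for k
  proof -
    have eq1: "(\<integral>\<^sup>+z. F k z \<partial>P) = ennreal (T\<^sup>2 * 4 ^ (k+1)) * ennreal (measure P {z. T * 2 ^ k \<le> \<bar>fst z\<bar>})"
      unfolding F_def by (subst nn_integral_cmult_indicator) (simp_all add: measure_pmf.emeasure_eq_measure)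
    have m1: "measure P {z. T * 2 ^ k \<le> \<bar>fst z\<bar>} \<le> 2 * exp (- (T * 2 ^ k)\<^sup>2 / c\<^sup>2)"
      using tl T by auto
    have e4: "(T * 2 ^ k)\<^sup>2 / c\<^sup>2 = 4 ^ k * L"
    proof -
      have "(2::real) ^ k * 2 ^ k = 4 ^ k" by (simp add: power_mult_distrib[symmetric])
      then have "(T * 2 ^ k)\<^sup>2 = T\<^sup>2 * 4 ^ k" by (simp add: power2_eq_square algebra_simps)
      then show ?thesis using T2 c by (simp add: field_simps)
    qed
    have m2: "measure P {z. T * 2 ^ k \<le> \<bar>fst z\<bar>} \<le> 2 * exp (- (4 ^ k * L))"
      using m1 e4 by (simp add: minus_divide_left[symmetric])
    have "(\<integral>\<^sup>+z. F k z \<partial>P) \<le> ennreal (T\<^sup>2 * 4 ^ (k+1)) * ennreal (2 * exp (- (4 ^ k * L)))"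
      unfolding eq1 using m2 by (intro mult_left_mono ennreal_leI) auto
    also have "\<dots> = ennreal (8 * T\<^sup>2 * (4 ^ k * exp (- (4 ^ k * L))))"
      by (simp add: ennreal_mult[symmetric] algebra_simps)
    also have "\<dots> \<le> ennreal (8 * T\<^sup>2 * (exp (- L) * (1/4) ^ k))"
      using term_bound[OF L, of k] by (intro ennreal_leI mult_left_mono) auto
    also have "\<dots> = ennreal (a * (1/4) ^ k)" by (simp add: a_def algebra_simps)
    finally show ?thesis .
  qed
  have sg: "summable (\<lambda>k. a * (1/4::real) ^ k)" by (intro summable_mult summable_geometric) simp
  have sv: "(\<Sum>k. a * (1/4::real) ^ k) = a * (4/3)"
    using suminf_mult[OF summable_geometric[of "1/4::real"], of a] suminf_geometric[of "1/4::real"] by simp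
  have "(\<integral>\<^sup>+z. ennreal ((if \<bar>fst z\<bar> \<le> c * sqrt L then 0 else fst z)\<^sup>2) \<partial>P) \<le> (\<integral>\<^sup>+z. (\<Sum>k. F k z) \<partial>P)"
    using pw unfolding T_def by (intro nn_integral_mono) auto
  also have "\<dots> = (\<Sum>k. \<integral>\<^sup>+z. F k z \<partial>P)"
    by (rule nn_integral_suminf) simp
  also have "\<dots> \<le> (\<Sum>k. ennreal (a * (1/4) ^ k))"
    using Fk by (intro suminf_le) (auto simp: summableI)
  also have "\<dots> = ennreal (a * (4/3))"
    using sg sv a0 by (subst suminf_ennreal2) auto
  also have "\<dots> \<le> ennreal (11 * c\<^sup>2 * L * exp (- L))"
    using T2 L by (intro ennreal_leI) (simp add: a_def)
  finally show ?thesis .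
qed




theorem lemma2:
  "\<exists>C::real. C > 0 \<and>
     (\<forall>(P :: (real \<times> real) pmf) (\<beta>::real) (c::real).
        c > 0 \<longrightarrow> \<beta> > 0 \<longrightarrow>
        integrable (measure_pmf P) (\<lambda>z. fst z) \<longrightarrow>
        measure_pmf.expectation P (\<lambda>z. fst z) = 0 \<longrightarrow>
        integrable (measure_pmf P) (\<lambda>z. (snd z)\<^sup>2) \<longrightarrow>
        measure_pmf.expectation P (\<lambda>z. (snd z)\<^sup>2) \<le> 1 \<longrightarrow>
        integrable (measure_pmf P) (\<lambda>z. fst z * snd z) \<longrightarrow>
        measure_pmf.expectation P (\<lambda>z. fst z * snd z) = \<beta> \<longrightarrow>
        (\<forall>t\<ge>0. measure_pmf.prob P {z. \<bar>fst z\<bar> \<ge> t} \<le> 2 * exp (- t\<^sup>2 / c\<^sup>2)) \<longrightarrow>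
        (mutual_info P = \<infinity> \<or>
         sqrt (enn2real (mutual_info P)) \<ge> C * \<beta>\<^sup>2 / (c\<^sup>2 * ln (2^20 * c\<^sup>2 / \<beta>\<^sup>2))))"
proof (intro exI[of _ "1/32"] conjI allI impI)
  fix P :: "(real \<times> real) pmf" and \<beta> c :: real
  assume c: "c > 0" and b: "\<beta> > 0"
    and i1: "integrable (measure_pmf P) (\<lambda>z. fst z)"
    and e1: "measure_pmf.expectation P (\<lambda>z. fst z) = 0"
    and i2: "integrable (measure_pmf P) (\<lambda>z. (snd z)\<^sup>2)"
    and e2: "measure_pmf.expectation P (\<lambda>z. (snd z)\<^sup>2) \<le> 1"
    and i3: "integrable (measure_pmf P) (\<lambda>z. fst z * snd z)"
    and e3: "measure_pmf.expectation P (\<lambda>z. fst z * snd z) = \<beta>"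
    and tl: "\<forall>t\<ge>0. measure_pmf.prob P {z. \<bar>fst z\<bar> \<ge> t} \<le> 2 * exp (- t\<^sup>2 / c\<^sup>2)"
  show "mutual_info P = \<infinity> \<or>
         sqrt (enn2real (mutual_info P)) \<ge> 1/32 * \<beta>\<^sup>2 / (c\<^sup>2 * ln (2^20 * c\<^sup>2 / \<beta>\<^sup>2))"
  proof (cases "mutual_info P = \<infinity>")
    case True then show ?thesis by simp
  next
    case fin: False
    have ny: "(\<integral>\<^sup>+z. ennreal ((snd z)\<^sup>2) \<partial>P) \<le> ennreal 1"
      using nn_integral_eq_integral[OF i2] e2 by (simp add: ennreal_leI)
    have exp2: "exp (-2::real) \<le> 1/4"
    proof -
      have e1: "2 \<le> exp (1::real)" using exp_ge_add_one_self[of 1] by simp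
      have "(2::real) * 2 \<le> exp 1 * exp 1" by (rule mult_mono[OF e1 e1]) auto
      then have "(4::real) \<le> exp 1 * exp 1" by simp
      then have "4 \<le> exp (2::real)" by (simp add: exp_add[symmetric])
      then show ?thesis by (simp add: exp_minus field_simps)
    qed
    have nx: "(\<integral>\<^sup>+z. ennreal ((fst z)\<^sup>2) \<partial>P) \<le> ennreal (8 * c\<^sup>2)"
    proof -
      have "(\<integral>\<^sup>+z. ennreal ((fst z)\<^sup>2) \<partial>P) \<le>
            (\<integral>\<^sup>+z. ennreal (2 * c\<^sup>2) + ennreal ((if \<bar>fst z\<bar> \<le> c * sqrt 2 then 0 else fst z)\<^sup>2) \<partial>P)"
      proof (intro nn_integral_mono)
        fix z :: "real \<times> real"
        show "ennreal ((fst z)\<^sup>2) \<le> ennreal (2 * c\<^sup>2) + ennreal ((if \<bar>fst z\<bar> \<le> c * sqrt 2 then 0 else fst z)\<^sup>2)"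
        proof (cases "\<bar>fst z\<bar> \<le> c * sqrt 2")
          case True
          then have "\<bar>fst z\<bar>\<^sup>2 \<le> (c * sqrt 2)\<^sup>2" by (intro power_mono) auto
          then have "(fst z)\<^sup>2 \<le> 2 * c\<^sup>2" by (simp add: power_mult_distrib)
          then show ?thesis using True by (simp add: ennreal_leI)
        next
          case False then show ?thesis by (simp add: add_increasing)
        qed
      qed
      also have "\<dots> = ennreal (2 * c\<^sup>2) + (\<integral>\<^sup>+z. ennreal ((if \<bar>fst z\<bar> \<le> c * sqrt 2 then 0 else fst z)\<^sup>2) \<partial>P)"
        by (simp add: nn_integral_add measure_pmf.emeasure_space_1)
      also have "\<dots> \<le> ennreal (2 * c\<^sup>2) + ennreal (11 * c\<^sup>2 * 2 * exp (- 2))"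
        using tail[OF c _ tl, of 2] by (intro add_left_mono) auto
      also have "\<dots> = ennreal (2 * c\<^sup>2 + 11 * c\<^sup>2 * 2 * exp (- 2))" by (simp add: ennreal_plus)
      also have "\<dots> \<le> ennreal (8 * c\<^sup>2)"
        using exp2 c by (intro ennreal_leI) (simp add: mult_left_mono)
      finally show ?thesis .
    qed
    have "\<bar>\<beta>\<bar> \<le> sqrt (8 * c\<^sup>2) * sqrt 1"
      using cs_real[OF _ _ nx ny] e3 by simp
    moreover have "sqrt (8 * c\<^sup>2) = 2 * sqrt 2 * c"
    proof -
      have "8 * c\<^sup>2 = (2 * sqrt 2 * c)\<^sup>2" by (simp add: power_mult_distrib)
      then show ?thesis using c by simp
    qed
    ultimately have bb: "\<beta> \<le> 2 * sqrt 2 * c" using b by simp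
    define A' where "A' = 2^20 * c\<^sup>2 / \<beta>\<^sup>2"
    define \<Lambda> where "\<Lambda> = ln A'"
    have bb2: "\<beta>\<^sup>2 \<le> 8 * c\<^sup>2"
    proof -
      have "\<beta>\<^sup>2 \<le> (2 * sqrt 2 * c)\<^sup>2" using bb b by (intro power_mono) auto
      then show ?thesis by (simp add: power_mult_distrib)
    qed
    have A'pos: "A' > 0" using b c by (simp add: A'_def)
    have A'big: "A' \<ge> 3"
    proof -
      have "3 * \<beta>\<^sup>2 \<le> 2^20 * c\<^sup>2" using bb2 zero_less_power[OF c, of 2] by (simp, linarith)
      then show ?thesis using b by (simp add: A'_def field_simps)
    qed
    have Lam1: "\<Lambda> \<ge> 1"
    proof -
      have "exp 1 \<le> A'" using exp_le A'big by linarith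
      then show ?thesis unfolding \<Lambda>_def using A'pos by (simp add: ln_ge_iff)
    qed
    have LamA: "\<Lambda> \<le> A'" unfolding \<Lambda>_def using ln_le_minus_one[OF A'pos] by simp
    define L where "L = 2 * \<Lambda>"
    have L2: "L \<ge> 2" using Lam1 by (simp add: L_def)
    define T where "T = c * sqrt L"
    have T: "T > 0" using c L2 by (simp add: T_def)
    define Gb where "Gb = 11 * c\<^sup>2 * L * exp (- L)"
    have Gb0: "Gb \<ge> 0" using L2 by (simp add: Gb_def)
    have G: "(\<integral>\<^sup>+z. ennreal ((if \<bar>fst z\<bar> \<le> T then 0 else fst z)\<^sup>2) \<partial>P) \<le> ennreal Gb"
      unfolding T_def Gb_def by (rule tail[OF c L2 tl])
    have main: "\<beta> \<le> 2 * T * sqrt (enn2real (mutual_info P)) + 2 * sqrt Gb"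
      by (rule core[OF T i1 e1 i2 e2 i3 e3 G Gb0 fin])
    have expL: "exp (- L) = 1 / A'\<^sup>2"
    proof -
      have "L = ln A' + ln A'" by (simp add: L_def \<Lambda>_def)
      then have "exp L = exp (ln A') * exp (ln A')" by (simp only: exp_add)
      then have "exp L = A'\<^sup>2" using A'pos by (simp add: power2_eq_square)
      then show ?thesis by (simp add: exp_minus field_simps)
    qed
    have "Gb = 11 * c\<^sup>2 * L * (1 / A'\<^sup>2)" by (simp only: Gb_def expL)
    also have "\<dots> = 22 * c\<^sup>2 * \<Lambda> / A'\<^sup>2" by (simp add: L_def)
    also have "\<dots> \<le> 22 * c\<^sup>2 * A' / A'\<^sup>2"
      using LamA c A'pos by (intro divide_right_mono mult_left_mono) auto
    also have "\<dots> = 22 * \<beta>\<^sup>2 / 2^20" using A'pos b c by (simp add: A'_def power2_eq_square field_simps)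
    also have "\<dots> \<le> (\<beta>/4)\<^sup>2" by (simp add: power_divide)
    finally have "Gb \<le> (\<beta>/4)\<^sup>2" .
    then have "sqrt Gb \<le> \<beta>/4" using b by (metis real_le_lsqrt less_eq_real_def zero_le_divide_iff zero_le_numeral Gb0 real_sqrt_le_mono real_sqrt_abs abs_of_pos)
    then have main2: "\<beta> \<le> 4 * T * sqrt (enn2real (mutual_info P))" using main by linarith
    define q where "q = sqrt (enn2real (mutual_info P))"
    define s where "s = sqrt \<Lambda>"
    have s1: "s \<ge> 1" using Lam1 by (simp add: s_def)
    have sL: "s\<^sup>2 = \<Lambda>" using Lam1 by (simp add: s_def)
    have q0: "q \<ge> 0" by (simp add: q_def)
    have Teq: "T = sqrt 2 * c * s" by (simp add: T_def L_def s_def real_sqrt_mult)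
    have m3: "\<beta> \<le> 4 * sqrt 2 * c * s * q" using main2 by (simp add: Teq q_def mult.assoc)
    have "\<beta> * \<beta> \<le> (4 * sqrt 2 * c * s * q) * (2 * sqrt 2 * c)"
      using m3 bb b c q0 s1 by (intro mult_mono) auto
    also have "\<dots> = 16 * c\<^sup>2 * s * q" by (simp add: power2_eq_square algebra_simps)
    finally have b2: "\<beta>\<^sup>2 \<le> 16 * c\<^sup>2 * s * q" by (simp add: power2_eq_square)
    have csq: "c\<^sup>2 * s * q \<ge> 0" using s1 q0 by simp
    have "1/32 * \<beta>\<^sup>2 \<le> c\<^sup>2 * s * q" using b2 csq by linarith
    also have "\<dots> \<le> c\<^sup>2 * s * q * s" using mult_left_mono[OF s1 csq] by simp
    also have "\<dots> = q * (c\<^sup>2 * \<Lambda>)" by (simp add: sL[symmetric] power2_eq_square algebra_simps)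
    finally have fin2: "1/32 * \<beta>\<^sup>2 \<le> q * (c\<^sup>2 * \<Lambda>)" .
    have "1/32 * \<beta>\<^sup>2 / (c\<^sup>2 * \<Lambda>) \<le> q"
      using fin2 c Lam1 by (simp add: pos_divide_le_eq)
    then show ?thesis by (simp add: q_def \<Lambda>_def A'_def)
  qed
qed simp


end
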